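(* Let $r>5$ with $r\not\equiv 0\pmod 3$, and let $C_r$ be the directed cycle of length $r$. If some type-A prime divides $r$, then $\chi^*_o(C_r)\leq 4-\beta(r)$.
   Context: The directed cycle $C_r$ has vertices $u_i$, $i\in\mathbb{Z}/r\mathbb{Z}$, and arcs $u_iu_{i+1}$. For a set $S$ of $k$ colors, a $b$-fold oriented $k$-coloring of an oriented graph $G$ is a map $f$ from $V(G)$ to the $b$-element subsets of $S$ such that (i) $f(x)\cap f(y)=\emptyset$ for every arc $xy$, and (ii) for all arcs $xy, zw$, $f(x)\cap f(w)\neq\emptyset$ implies $f(y)\cap f(z)=\emptyset$. $\chi^b_o(G)$ is the minimum such $k$, and $\chi^*_o(G)=\lim_{b\to\infty}\chi^b_o(G)/b=\inf_{b\ge1}\chi^b_o(G)/b$. A prime $p>3$ is type-A if $p\equiv 3\pmod 4$. For $r>5$: $\beta(r)=0$ if $r$ has no type-A prime factor, and otherwise $\beta(r)=\frac{4}{p+1}$ where $p$ is the least type-A prime factor of $r$. *)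

theory Defs
  imports Complex_Main "HOL-Computational_Algebra.Primes"
begin

definition cycle_V :: "nat \<Rightarrow> nat set" where
  "cycle_V r = {..<r}"

definition cycle_A :: "nat \<Rightarrow> (nat \<times> nat) set" where
  "cycle_A r = {(i, (i + 1) mod r) | i. i < r}"

definition oriented_coloring ::
  "'a set \<Rightarrow> ('a \<times> 'a) set \<Rightarrow> nat \<Rightarrow> nat \<Rightarrow> ('a \<Rightarrow> nat set) \<Rightarrow> bool" where
  "oriented_coloring V A b k f \<longleftrightarrow>
     (\<forall>x\<in>V. f x \<subseteq> {..<k} \<and> card (f x) = b) \<and>
     (\<forall>(x, y)\<in>A. f x \<inter> f y = {}) \<and>
     (\<forall>(x, y)\<in>A. \<forall>(z, w)\<in>A. f x \<inter> f w \<noteq> {} \<longrightarrow> f y \<inter> f z = {})"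

definition chi_b :: "'a set \<Rightarrow> ('a \<times> 'a) set \<Rightarrow> nat \<Rightarrow> nat" where
  "chi_b V A b = Inf {k. \<exists>f. oriented_coloring V A b k f}"

definition chi_star :: "'a set \<Rightarrow> ('a \<times> 'a) set \<Rightarrow> real" where
  "chi_star V A = (INF b\<in>{1::nat..}. real (chi_b V A b) / real b)"

definition typeA :: "nat \<Rightarrow> bool" where
  "typeA p \<longleftrightarrow> prime p \<and> p > 3 \<and> p mod 4 = 3"

definition beta :: "nat \<Rightarrow> real" where
  "beta r = (if \<exists>p. typeA p \<and> p dvd r
             then 4 / (real (LEAST p. typeA p \<and> p dvd r) + 1) else 0)"

end

theory Submission
  imports Defs
begin

lemma nat_mod_eq_int_dvd:
  fixes a c p :: nat
  assumes "a mod p = c mod p"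
  shows "int p dvd int a - int c"
proof -
  have "int a mod int p = int c mod int p" using assms
    by (metis of_nat_mod)
  thus ?thesis using mod_eq_dvd_iff by blast
qed

lemma small_not_dvd:
  fixes d :: int and p :: nat
  assumes "0 < d" "d < int p" "int p dvd d"
  shows False
  using assms zdvd_imp_le by fastforce

definition fcol :: "nat \<Rightarrow> nat \<Rightarrow> nat \<Rightarrow> nat set" where
  "fcol p b x = (\<lambda>j. (x*b+j) mod p) ` {..<b}"

lemma fcol_card:
  assumes "b < p"
  shows "card (fcol p b x) = b"
proof -
  have "inj_on (\<lambda>j. (x*b+j) mod p) {..<b}"
  proof (rule inj_onI)
    fix j j' assume j: "j \<in> {..<b}" "j' \<in> {..<b}" and e: "(x*b+j) mod p = (x*b+j') mod p"
    have "int p dvd int (x*b+j) - int (x*b+j')" using nat_mod_eq_int_dvd[OF e] .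
    hence d: "int p dvd int j - int j'" by simp
    show "j = j'"
    proof (rule ccontr)
      assume "j \<noteq> j'"
      then consider "j < j'" | "j' < j" by linarith
      thus False
      proof cases
        case 1
        have "int p dvd int j' - int j" using d by (metis dvd_minus_iff minus_diff_eq)
        moreover have "0 < int j' - int j" using 1 by linarith
        moreover have "int j' - int j < int p" using j assms by auto
        ultimately show False using small_not_dvd by blast
      next
        case 2
        have "0 < int j - int j'" using 2 by linarith
        moreover have "int j - int j' < int p" using j assms by auto
        ultimately show False using small_not_dvd d by blast
      qed
    qed
  qed
  thus ?thesis unfolding fcol_def by (simp add: card_image)
qed

lemma fcol_shift:
  assumes "p dvd r"
  shows "fcol p b ((i+1) mod r) = fcol p b (i+1)"
proof -
  have "((i+1) mod r) mod p = (i+1) mod p" using assms by (simp add: mod_mod_cancel)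
  hence "\<And>j. (((i+1) mod r)*b+j) mod p = ((i+1)*b+j) mod p"
    by (metis mod_add_left_eq mod_mult_left_eq)
  thus ?thesis unfolding fcol_def by simp
qed

lemma fcol_disj:
  assumes "p + 1 = 4*b"
  shows "fcol p b x \<inter> fcol p b (x+1) = {}"
proof (rule ccontr)
  assume "fcol p b x \<inter> fcol p b (x+1) \<noteq> {}"
  then obtain j1 j2 where j: "j1 < b" "j2 < b" and e: "(x*b+j1) mod p = ((x+1)*b+j2) mod p"
    unfolding fcol_def by auto
  have "int p dvd int ((x+1)*b+j2) - int (x*b+j1)" using nat_mod_eq_int_dvd[OF e[symmetric]] .
  hence "int p dvd int b + int j2 - int j1" by (simp add: algebra_simps)
  moreover have pb': "int p + 1 = 4 * int b" using arg_cong[OF assms, of int] by simp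
  moreover have "0 < int b + int j2 - int j1" using j by linarith
  moreover have "int b + int j2 - int j1 < int p" using j pb' by linarith
  ultimately show False using small_not_dvd by blast
qed

lemma fcol_orient:
  assumes "p + 1 = 4*b"
  shows "fcol p b x \<inter> fcol p b (l+1) = {} \<or> fcol p b (x+1) \<inter> fcol p b l = {}"
proof (rule ccontr)
  assume "\<not> ?thesis"
  then obtain j1 j2 j3 j4 where j: "j1 < b" "j2 < b" "j3 < b" "j4 < b"
    and e1: "(x*b+j1) mod p = ((l+1)*b+j2) mod p"
    and e2: "((x+1)*b+j3) mod p = (l*b+j4) mod p"
    unfolding fcol_def by blast
  have d1: "int p dvd int (x*b+j1) - int ((l+1)*b+j2)" using nat_mod_eq_int_dvd[OF e1] .
  have d2: "int p dvd int ((x+1)*b+j3) - int (l*b+j4)" using nat_mod_eq_int_dvd[OF e2] .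
  have "int p dvd (int ((x+1)*b+j3) - int (l*b+j4)) - (int (x*b+j1) - int ((l+1)*b+j2))"
    using d1 d2 by (rule dvd_diff[rotated])
  hence "int p dvd 2 * int b + int j3 - int j4 - int j1 + int j2" by (simp add: algebra_simps)
  moreover have pb': "int p + 1 = 4 * int b" using arg_cong[OF assms, of int] by simp
  moreover have "0 < 2 * int b + int j3 - int j4 - int j1 + int j2" using j by linarith
  moreover have "2 * int b + int j3 - int j4 - int j1 + int j2 < int p" using j pb' by linarith
  ultimately show False using small_not_dvd by blast
qed

lemma coloring_exists:
  assumes "p dvd r" "p + 1 = 4*b" "b \<ge> 1"
  shows "oriented_coloring (cycle_V r) (cycle_A r) b p (fcol p b)"
proof -
  have bp: "b < p" using assms by linarith
  have sub: "fcol p b x \<subseteq> {..<p}" for x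
    unfolding fcol_def using bp by auto
  have sh: "fcol p b ((i+1) mod r) = fcol p b (i+1)" for i using fcol_shift[OF assms(1)] .
  have A: "\<forall>x\<in>cycle_V r. fcol p b x \<subseteq> {..<p} \<and> card (fcol p b x) = b"
    using sub fcol_card[OF bp] by auto
  have B: "\<forall>(x, y)\<in>cycle_A r. fcol p b x \<inter> fcol p b y = {}"
    unfolding cycle_A_def using sh fcol_disj[OF assms(2)] by auto
  have C: "\<forall>(x, y)\<in>cycle_A r. \<forall>(z, w)\<in>cycle_A r.
      fcol p b x \<inter> fcol p b w \<noteq> {} \<longrightarrow> fcol p b y \<inter> fcol p b z = {}"
  proof (intro ballI, clarify)
    fix x y z w
    assume "(x, y) \<in> cycle_A r" "(z, w) \<in> cycle_A r"
    then have y: "fcol p b y = fcol p b (x+1)" and w: "fcol p b w = fcol p b (z+1)"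
      unfolding cycle_A_def using sh by auto
    assume "fcol p b x \<inter> fcol p b w \<noteq> {}"
    thus "fcol p b y \<inter> fcol p b z = {}"
      using fcol_orient[OF assms(2), of x z] y w by simp
  qed
  show ?thesis unfolding oriented_coloring_def using A B C by blast
qed

theorem lemma9:
  fixes r :: nat
  assumes "r > 5" and "\<not> 3 dvd r" and "\<exists>p. typeA p \<and> p dvd r"
  shows "chi_star (cycle_V r) (cycle_A r) \<le> 4 - beta r"
proof -
  define p where "p = (LEAST p. typeA p \<and> p dvd r)"
  have pp: "typeA p \<and> p dvd r" unfolding p_def by (rule LeastI_ex[OF assms(3)])
  have beta: "beta r = 4 / (real p + 1)" unfolding beta_def p_def by (subst if_P[OF assms(3)]) (rule refl)
  have pm: "p mod 4 = 3" "p > 3" using pp unfolding typeA_def by auto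
  define b where "b = (p + 1) div 4"
  have pb: "p + 1 = 4*b" unfolding b_def using pm by presburger
  have b1: "b \<ge> 1" using pb pm by linarith
  have col: "oriented_coloring (cycle_V r) (cycle_A r) b p (fcol p b)"
    using coloring_exists pp pb b1 by blast
  have "chi_b (cycle_V r) (cycle_A r) b \<le> p"
    unfolding chi_b_def proof (rule cInf_lower)
    show "p \<in> {k. \<exists>f. oriented_coloring (cycle_V r) (cycle_A r) b k f}" using col by blast
  qed simp
  hence "real (chi_b (cycle_V r) (cycle_A r) b) / real b \<le> real p / real b"
    using b1 by (simp add: divide_right_mono)
  moreover have "chi_star (cycle_V r) (cycle_A r) \<le> real (chi_b (cycle_V r) (cycle_A r) b) / real b"
    unfolding chi_star_def
    by (rule cINF_lower) (use b1 in \<open>auto intro!: bdd_belowI[where m=0]\<close>)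
  moreover have "real p / real b = 4 - beta r"
  proof -
    have "real p + 1 = 4 * real b" using pb by (metis of_nat_1 of_nat_add of_nat_mult of_nat_numeral)
    thus ?thesis unfolding beta using b1 by (simp add: field_simps)
  qed
  ultimately show ?thesis by linarith
qed

end
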